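(* Let $G$ be the graph on vertex set $\{a,b,p,q,x,z\}$ with edges $\{a,b\},\{a,x\},\{b,x\},\{a,p\},\{b,q\},\{p,z\},\{x,z\},\{q,z\}$, and let $I(G)\subseteq K[a,b,p,q,x,z]$ ($K$ a field) be its edge ideal. Then $I(G)^s$ has linear quotients for all $s\ge 2$.
   Context: The edge ideal is generated by the monomials $uv$ for the edges $\{u,v\}$ of $G$. A monomial ideal generated in a single degree has linear quotients if its minimal monomial generators can be ordered $u_1>\cdots>u_r$ so that each colon ideal $(u_1,\ldots,u_i):u_{i+1}$, $1\le i<r$, is generated by a subset of the variables. *)

theory Defs
  imports "HOL-Library.Poly_Mapping"
begin

datatype var = a | b | p | q | x | z

text \<open>Polynomials over K in the variables var: finitely supported maps from
  exponent vectors (monomials) to coefficients, with convolution product.\<close>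
type_synonym 'k mpoly = "(var \<Rightarrow>\<^sub>0 nat) \<Rightarrow>\<^sub>0 'k"

definition monomial_of :: "(var \<Rightarrow>\<^sub>0 nat) \<Rightarrow> 'k::field mpoly" where
  "monomial_of m = Poly_Mapping.single m 1"

definition Var :: "var \<Rightarrow> 'k::field mpoly" where
  "Var v = monomial_of (Poly_Mapping.single v 1)"

definition ideal_gen :: "'k::field mpoly set \<Rightarrow> 'k mpoly set" where
  "ideal_gen S = {f. \<exists>F r. finite F \<and> F \<subseteq> S \<and> f = (\<Sum>g\<in>F. r g * g)}"

definition ideal_mult :: "'k::field mpoly set \<Rightarrow> 'k mpoly set \<Rightarrow> 'k mpoly set" where
  "ideal_mult I J = ideal_gen {f * g | f g. f \<in> I \<and> g \<in> J}"

fun ideal_power :: "'k::field mpoly set \<Rightarrow> nat \<Rightarrow> 'k mpoly set" where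
  "ideal_power I 0 = UNIV"
| "ideal_power I (Suc n) = ideal_mult I (ideal_power I n)"

definition colon :: "'k::field mpoly set \<Rightarrow> 'k mpoly \<Rightarrow> 'k mpoly set" where
  "colon J u = {f. f * u \<in> J}"

definition min_mono_gens :: "'k::field mpoly set \<Rightarrow> 'k mpoly set" where
  "min_mono_gens I = {monomial_of m | m. monomial_of m \<in> I \<and>
      (\<forall>m' c. monomial_of m' \<in> I \<and> m = m' + c \<longrightarrow> c = 0)}"

definition linear_quotients :: "'k::field mpoly set \<Rightarrow> bool" where
  "linear_quotients I \<longleftrightarrow> (\<exists>us. distinct us \<and> set us = min_mono_gens I \<and>
     (\<forall>i. 1 \<le> i \<and> i < length us \<longrightarrow>
        (\<exists>S. colon (ideal_gen (set (take i us))) (us ! i) = ideal_gen (Var ` S))))"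

definition G_edges :: "var set set" where
  "G_edges = {{a,b},{a,x},{b,x},{a,p},{b,q},{p,z},{x,z},{q,z}}"

definition edge_ideal :: "var set set \<Rightarrow> 'k::field mpoly set" where
  "edge_ideal E = ideal_gen {Var u * Var v | u v. {u, v} \<in> E \<and> u \<noteq> v}"

end

theory Submission
  imports Defs "HOL-Library.Product_Lexorder"
begin

definition inGi :: "int \<Rightarrow> int \<Rightarrow> int \<Rightarrow> int \<Rightarrow> int \<Rightarrow> int \<Rightarrow> int \<Rightarrow> bool" where
 "inGi s na nb np nq nx nz \<longleftrightarrow> na \<ge> 0 \<and> nb \<ge> 0 \<and> np \<ge> 0 \<and> nq \<ge> 0 \<and> nx \<ge> 0 \<and> nz \<ge> 0 \<and> na+nb+np+nq+nx+nz = 2*s \<and> np+nq+nx \<le> s \<and> na+nz \<le> s \<and> nb+nz \<le> s \<and> na+nq \<le> s \<and> nb+np \<le> s"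
definition earli :: "int \<Rightarrow> int \<Rightarrow> int \<Rightarrow> int \<Rightarrow> int \<Rightarrow> int \<Rightarrow> int \<Rightarrow> int \<Rightarrow> int \<Rightarrow> int \<Rightarrow> int \<Rightarrow> int \<Rightarrow> bool" where
 "earli na2 nb2 np2 nq2 nx2 nz2 na nb np nq nx nz \<longleftrightarrow> nx2 > nx \<or> nx2 = nx \<and> (na2 > na \<or> na2 = na \<and> (nb2 > nb \<or> nb2 = nb \<and> (nz2 < nz \<or> nz2 = nz \<and>
    (if na \<ge> 1 then np2 > np else if nb \<ge> 1 then np2 < np else
      (\<bar>np2 - nq2\<bar> < \<bar>np - nq\<bar> \<or> \<bar>np2 - nq2\<bar> = \<bar>np - nq\<bar> \<and> np2 > np)))))"
lemma exch_X:
  assumes "s \<ge> 2" "inGi s na nb np nq nx nz" "inGi s na2 nb2 np2 nq2 nx2 nz2" "nx2 > nx"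
  shows "(nx2 > nx \<and> nq \<ge> 1 \<and> inGi s (na) (nb) (np) (nq-1) (nx+1) (nz) \<and> earli (na) (nb) (np) (nq-1) (nx+1) (nz) (na) (nb) (np) (nq) (nx) (nz)) \<or>
   (nx2 > nx \<and> na \<ge> 1 \<and> inGi s (na-1) (nb) (np) (nq) (nx+1) (nz) \<and> earli (na-1) (nb) (np) (nq) (nx+1) (nz) (na) (nb) (np) (nq) (nx) (nz)) \<or>
   (nx2 > nx \<and> np \<ge> 1 \<and> inGi s (na) (nb) (np-1) (nq) (nx+1) (nz) \<and> earli (na) (nb) (np-1) (nq) (nx+1) (nz) (na) (nb) (np) (nq) (nx) (nz))"
  using assms unfolding inGi_def earli_def by (smt (verit))

lemma exch_A:
  assumes "s \<ge> 2" "inGi s na nb np nq nx nz" "inGi s na2 nb2 np2 nq2 nx2 nz2" "nx2 = nx \<and> na2 > na"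
  shows "(na2 > na \<and> nz \<ge> 1 \<and> inGi s (na+1) (nb) (np) (nq) (nx) (nz-1) \<and> earli (na+1) (nb) (np) (nq) (nx) (nz-1) (na) (nb) (np) (nq) (nx) (nz)) \<or>
   (na2 > na \<and> nq \<ge> 1 \<and> inGi s (na+1) (nb) (np) (nq-1) (nx) (nz) \<and> earli (na+1) (nb) (np) (nq-1) (nx) (nz) (na) (nb) (np) (nq) (nx) (nz)) \<or>
   (nb2 > nb \<and> nz \<ge> 1 \<and> inGi s (na) (nb+1) (np) (nq) (nx) (nz-1) \<and> earli (na) (nb+1) (np) (nq) (nx) (nz-1) (na) (nb) (np) (nq) (nx) (nz)) \<or>
   (na2 > na \<and> nb \<ge> 1 \<and> inGi s (na+1) (nb-1) (np) (nq) (nx) (nz) \<and> earli (na+1) (nb-1) (np) (nq) (nx) (nz) (na) (nb) (np) (nq) (nx) (nz)) \<or>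
   (np2 > np \<and> nq \<ge> 1 \<and> inGi s (na) (nb) (np+1) (nq-1) (nx) (nz) \<and> earli (na) (nb) (np+1) (nq-1) (nx) (nz) (na) (nb) (np) (nq) (nx) (nz))"
  using assms unfolding inGi_def earli_def by (smt (verit))

lemma exch_B:
  assumes "s \<ge> 2" "inGi s na nb np nq nx nz" "inGi s na2 nb2 np2 nq2 nx2 nz2" "nx2 = nx \<and> na2 = na \<and> nb2 > nb"
  shows "(nb2 > nb \<and> nz \<ge> 1 \<and> inGi s (na) (nb+1) (np) (nq) (nx) (nz-1) \<and> earli (na) (nb+1) (np) (nq) (nx) (nz-1) (na) (nb) (np) (nq) (nx) (nz)) \<or>
   (nb2 > nb \<and> np \<ge> 1 \<and> inGi s (na) (nb+1) (np-1) (nq) (nx) (nz) \<and> earli (na) (nb+1) (np-1) (nq) (nx) (nz) (na) (nb) (np) (nq) (nx) (nz)) \<or>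
   (nb2 > nb \<and> nq \<ge> 1 \<and> inGi s (na) (nb+1) (np) (nq-1) (nx) (nz) \<and> earli (na) (nb+1) (np) (nq-1) (nx) (nz) (na) (nb) (np) (nq) (nx) (nz)) \<or>
   (nq2 > nq \<and> np \<ge> 1 \<and> inGi s (na) (nb) (np-1) (nq+1) (nx) (nz) \<and> earli (na) (nb) (np-1) (nq+1) (nx) (nz) (na) (nb) (np) (nq) (nx) (nz)) \<or>
   (nq2 > nq \<and> nz \<ge> 1 \<and> inGi s (na) (nb) (np) (nq+1) (nx) (nz-1) \<and> earli (na) (nb) (np) (nq+1) (nx) (nz-1) (na) (nb) (np) (nq) (nx) (nz))"
  using assms unfolding inGi_def earli_def by (smt (verit))

lemma exch_Z:
  assumes "s \<ge> 2" "inGi s na nb np nq nx nz" "inGi s na2 nb2 np2 nq2 nx2 nz2" "nx2 = nx \<and> na2 = na \<and> nb2 = nb \<and> nz2 < nz"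
  shows "(np2 > np \<and> nz \<ge> 1 \<and> inGi s (na) (nb) (np+1) (nq) (nx) (nz-1) \<and> earli (na) (nb) (np+1) (nq) (nx) (nz-1) (na) (nb) (np) (nq) (nx) (nz)) \<or>
   (nq2 > nq \<and> nz \<ge> 1 \<and> inGi s (na) (nb) (np) (nq+1) (nx) (nz-1) \<and> earli (na) (nb) (np) (nq+1) (nx) (nz-1) (na) (nb) (np) (nq) (nx) (nz))"
  using assms unfolding inGi_def earli_def by (smt (verit))

lemma exch_Wa:
  assumes "s \<ge> 2" "inGi s na nb np nq nx nz" "inGi s na2 nb2 np2 nq2 nx2 nz2" "nx2 = nx \<and> na2 = na \<and> nb2 = nb \<and> nz2 = nz \<and> na \<ge> 1 \<and> np2 > np"
  shows "(np2 > np \<and> nq \<ge> 1 \<and> inGi s (na) (nb) (np+1) (nq-1) (nx) (nz) \<and> earli (na) (nb) (np+1) (nq-1) (nx) (nz) (na) (nb) (np) (nq) (nx) (nz))"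
  using assms unfolding inGi_def earli_def by (smt (verit))

lemma exch_Wb:
  assumes "s \<ge> 2" "inGi s na nb np nq nx nz" "inGi s na2 nb2 np2 nq2 nx2 nz2" "nx2 = nx \<and> na2 = na \<and> nb2 = nb \<and> nz2 = nz \<and> na = 0 \<and> nb \<ge> 1 \<and> np2 < np"
  shows "(nq2 > nq \<and> np \<ge> 1 \<and> inGi s (na) (nb) (np-1) (nq+1) (nx) (nz) \<and> earli (na) (nb) (np-1) (nq+1) (nx) (nz) (na) (nb) (np) (nq) (nx) (nz))"
  using assms unfolding inGi_def earli_def by (smt (verit))

lemma exch_W0:
  assumes "s \<ge> 2" "inGi s na nb np nq nx nz" "inGi s na2 nb2 np2 nq2 nx2 nz2" "nx2 = nx \<and> na2 = na \<and> nb2 = nb \<and> nz2 = nz \<and> na = 0 \<and> nb = 0 \<and> (\<bar>np2 - nq2\<bar> < \<bar>np - nq\<bar> \<or> \<bar>np2 - nq2\<bar> = \<bar>np - nq\<bar> \<and> np2 > np)"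
  shows "(nq2 > nq \<and> np \<ge> 1 \<and> inGi s (na) (nb) (np-1) (nq+1) (nx) (nz) \<and> earli (na) (nb) (np-1) (nq+1) (nx) (nz) (na) (nb) (np) (nq) (nx) (nz)) \<or>
   (np2 > np \<and> nq \<ge> 1 \<and> inGi s (na) (nb) (np+1) (nq-1) (nx) (nz) \<and> earli (na) (nb) (np+1) (nq-1) (nx) (nz) (na) (nb) (np) (nq) (nx) (nz))"
proof -
  have h: "na = 0" "nb = 0" "nx2 = nx" "nz2 = nz" using assms(4) by auto
  have e: "np2 + nq2 = np + nq" using assms(2,3) h unfolding inGi_def by auto
  show ?thesis
  proof (cases "np \<ge> nq")
    case True
    then show ?thesis using assms e h unfolding inGi_def earli_def by (smt (verit))
  next
    case False
    then show ?thesis using assms e h unfolding inGi_def earli_def by (smt (verit))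
  qed
qed

type_synonym mono = "var \<Rightarrow>\<^sub>0 nat"

definition I :: "mono \<Rightarrow> var \<Rightarrow> int" where "I m v = int (Poly_Mapping.lookup m v)"

definition inGm :: "nat \<Rightarrow> mono \<Rightarrow> bool" where
  "inGm s m \<longleftrightarrow> inGi (int s) (I m a) (I m b) (I m p) (I m q) (I m x) (I m z)"

definition earlm :: "mono \<Rightarrow> mono \<Rightarrow> bool" where
  "earlm m2 m \<longleftrightarrow> earli (I m2 a) (I m2 b) (I m2 p) (I m2 q) (I m2 x) (I m2 z) (I m a) (I m b) (I m p) (I m q) (I m x) (I m z)"

definition sh :: "mono \<Rightarrow> var \<Rightarrow> var \<Rightarrow> mono" where
  "sh u v w = u + Poly_Mapping.single v 1 - Poly_Mapping.single w 1"

lemma I_sh: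
  assumes "v \<noteq> w" "I u w \<ge> 1"
  shows "I (sh u v w) t = I u t + (if t = v then 1 else 0) - (if t = w then 1 else 0)"
  using assms unfolding I_def sh_def
  by (auto simp: lookup_add lookup_minus lookup_single when_def)

lemma I_nonneg: "I m v \<ge> 0" by (simp add: I_def)

lemma exch_mono:
  assumes "s \<ge> 2" "inGm s u" "inGm s d" "earlm d u"
  shows "\<exists>v w. v \<noteq> w \<and> I d v > I u v \<and> I u w \<ge> 1 \<and> inGm s (sh u v w) \<and> earlm (sh u v w) u"
proof -
  have s2: "int s \<ge> 2" using assms(1) by simp
  note G1 = assms(2)[unfolded inGm_def] and G2 = assms(3)[unfolded inGm_def]
  note E = assms(4)[unfolded earlm_def earli_def]
  have W: "v \<noteq> w \<Longrightarrow> I d v > I u v \<Longrightarrow> I u w \<ge> 1 \<Longrightarrow> inGm s (sh u v w) \<Longrightarrow> earlm (sh u v w) u \<Longrightarrow> ?thesis" for v w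
    by blast
  have W': "v \<noteq> w \<Longrightarrow> I d v > I u v \<Longrightarrow> I u w \<ge> 1 \<Longrightarrow>
     inGi (int s) (I (sh u v w) a) (I (sh u v w) b) (I (sh u v w) p) (I (sh u v w) q) (I (sh u v w) x) (I (sh u v w) z) \<Longrightarrow>
     earli (I (sh u v w) a) (I (sh u v w) b) (I (sh u v w) p) (I (sh u v w) q) (I (sh u v w) x) (I (sh u v w) z) (I u a) (I u b) (I u p) (I u q) (I u x) (I u z) \<Longrightarrow> ?thesis" for v w
    using W unfolding inGm_def earlm_def by blast
  consider (X) "I d x > I u x"
    | (A) "I d x = I u x \<and> I d a > I u a"
    | (B) "I d x = I u x \<and> I d a = I u a \<and> I d b > I u b"
    | (Z) "I d x = I u x \<and> I d a = I u a \<and> I d b = I u b \<and> I d z < I u z"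
    | (Wa) "I d x = I u x \<and> I d a = I u a \<and> I d b = I u b \<and> I d z = I u z \<and> I u a \<ge> 1 \<and> I d p > I u p"
    | (Wb) "I d x = I u x \<and> I d a = I u a \<and> I d b = I u b \<and> I d z = I u z \<and> I u a = 0 \<and> I u b \<ge> 1 \<and> I d p < I u p"
    | (W0) "I d x = I u x \<and> I d a = I u a \<and> I d b = I u b \<and> I d z = I u z \<and> I u a = 0 \<and> I u b = 0 \<and>
        (\<bar>I d p - I d q\<bar> < \<bar>I u p - I u q\<bar> \<or> \<bar>I d p - I d q\<bar> = \<bar>I u p - I u q\<bar> \<and> I d p > I u p)"
    using E I_nonneg[of u a] I_nonneg[of u b] by (auto split: if_splits)
  then show ?thesis
  proof cases
    case X
    from exch_X[OF s2 G1 G2 X] show ?thesis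
      apply (elim disjE conjE)
        apply (rule W'[of x q]; simp add: I_sh)
       apply (rule W'[of x a]; simp add: I_sh)
      apply (rule W'[of x p]; simp add: I_sh)
      done
  next
    case A
    from exch_A[OF s2 G1 G2 A] show ?thesis
      apply (elim disjE conjE)
          apply (rule W'[of a z]; simp add: I_sh)
         apply (rule W'[of a q]; simp add: I_sh)
        apply (rule W'[of b z]; simp add: I_sh)
       apply (rule W'[of a b]; simp add: I_sh)
      apply (rule W'[of p q]; simp add: I_sh)
      done
  next
    case B
    from exch_B[OF s2 G1 G2 B] show ?thesis
      apply (elim disjE conjE)
          apply (rule W'[of b z]; simp add: I_sh)
         apply (rule W'[of b p]; simp add: I_sh)
        apply (rule W'[of b q]; simp add: I_sh)
       apply (rule W'[of q p]; simp add: I_sh)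
      apply (rule W'[of q z]; simp add: I_sh)
      done
  next
    case Z
    from exch_Z[OF s2 G1 G2 Z] show ?thesis
      apply (elim disjE conjE)
       apply (rule W'[of p z]; simp add: I_sh)
      apply (rule W'[of q z]; simp add: I_sh)
      done
  next
    case Wa
    from exch_Wa[OF s2 G1 G2 Wa] show ?thesis
      apply (elim disjE conjE)
      apply (rule W'[of p q]; simp add: I_sh)
      done
  next
    case Wb
    from exch_Wb[OF s2 G1 G2 Wb] show ?thesis
      apply (elim disjE conjE)
      apply (rule W'[of q p]; simp add: I_sh)
      done
  next
    case W0
    from exch_W0[OF s2 G1 G2 W0] show ?thesis
      apply (elim disjE conjE)
       apply (rule W'[of q p]; simp add: I_sh)
      apply (rule W'[of p q]; simp add: I_sh)
      done
  qed
qed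

section \<open>Ideal generation\<close>

lemma ideal_gen_0: "0 \<in> ideal_gen S"
  unfolding ideal_gen_def by (rule CollectI, rule exI[of _ "{}"], auto)

lemma ideal_gen_gen: "g \<in> S \<Longrightarrow> g \<in> ideal_gen S"
  unfolding ideal_gen_def by (rule CollectI, rule exI[of _ "{g}"], rule exI[of _ "\<lambda>_. 1"], auto)

lemma ideal_gen_add:
  assumes "f \<in> ideal_gen S" "h \<in> ideal_gen S"
  shows "f + h \<in> ideal_gen S"
proof -
  obtain F r where F: "finite F" "F \<subseteq> S" "f = (\<Sum>g\<in>F. r g * g)"
    using assms(1) unfolding ideal_gen_def by blast
  obtain H t where H: "finite H" "H \<subseteq> S" "h = (\<Sum>g\<in>H. t g * g)"
    using assms(2) unfolding ideal_gen_def by blast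
  define r' where "r' g = (if g \<in> F then r g else 0)" for g
  define t' where "t' g = (if g \<in> H then t g else 0)" for g
  have 1: "f = (\<Sum>g\<in>F \<union> H. r' g * g)"
    unfolding F(3) r'_def
    by (rule sum.mono_neutral_cong_left) (use F H in auto)
  have 2: "h = (\<Sum>g\<in>F \<union> H. t' g * g)"
    unfolding H(3) t'_def
    by (rule sum.mono_neutral_cong_left) (use F H in auto)
  have "f + h = (\<Sum>g\<in>F \<union> H. (r' g + t' g) * g)"
    unfolding 1 2 by (simp add: sum.distrib distrib_right)
  then show ?thesis unfolding ideal_gen_def
    by (intro CollectI exI[of _ "F \<union> H"] exI[of _ "\<lambda>g. r' g + t' g"]) (use F H in auto)
qed

lemma ideal_gen_mult:
  assumes "f \<in> ideal_gen S"
  shows "c * f \<in> ideal_gen S"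
proof -
  obtain F r where F: "finite F" "F \<subseteq> S" "f = (\<Sum>g\<in>F. r g * g)"
    using assms(1) unfolding ideal_gen_def by blast
  have "c * f = (\<Sum>g\<in>F. (c * r g) * g)"
    unfolding F(3) by (simp add: sum_distrib_left mult.assoc)
  then show ?thesis unfolding ideal_gen_def
    by (intro CollectI exI[of _ F] exI[of _ "\<lambda>g. c * r g"]) (use F in auto)
qed

lemma ideal_gen_sum:
  assumes "finite A" "\<And>i. i \<in> A \<Longrightarrow> f i \<in> ideal_gen S"
  shows "sum f A \<in> ideal_gen S"
  using assms by (induction A rule: finite_induct) (auto intro: ideal_gen_0 ideal_gen_add)

lemma ideal_gen_subset:
  assumes "S \<subseteq> ideal_gen T"
  shows "ideal_gen S \<subseteq> ideal_gen T"
proof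
  fix f assume "f \<in> ideal_gen S"
  then obtain F r where F: "finite F" "F \<subseteq> S" "f = (\<Sum>g\<in>F. r g * g)"
    unfolding ideal_gen_def by blast
  show "f \<in> ideal_gen T"
    unfolding F(3) using F assms by (intro ideal_gen_sum ideal_gen_mult) auto
qed

section \<open>Monomial ideals\<close>

definition dv :: "mono \<Rightarrow> mono \<Rightarrow> bool" where
  "dv d m \<longleftrightarrow> (\<forall>v. Poly_Mapping.lookup d v \<le> Poly_Mapping.lookup m v)"

lemma monomial_of_mult: "monomial_of m * monomial_of n = (monomial_of (m + n) :: 'k::field mpoly)"
  unfolding monomial_of_def by (simp add: mult_single)

lemma keys_monomial_of: "Poly_Mapping.keys (monomial_of m :: 'k::field mpoly) = {m}"
  unfolding monomial_of_def by simp

lemma monomial_of_inj: "inj (monomial_of :: mono \<Rightarrow> 'k::field mpoly)"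
  unfolding monomial_of_def by (rule injI) (metis keys_single one_neq_zero singleton_inject)

lemma poly_expand: "f = (\<Sum>m\<in>Poly_Mapping.keys f. Poly_Mapping.single m (Poly_Mapping.lookup f m))"
  by (rule poly_mapping_eqI) (simp add: lookup_sum lookup_single when_def sum.delta in_keys_iff)

lemma single_split:
  assumes "dv d m"
  shows "Poly_Mapping.single m c = Poly_Mapping.single (m - d) c * (monomial_of d :: 'k::field mpoly)"
proof -
  have "m - d + d = m"
    using assms unfolding dv_def by (intro poly_mapping_eqI) (simp add: lookup_add lookup_minus)
  then show ?thesis unfolding monomial_of_def by (simp add: mult_single)
qed

lemma mem_MI:
  fixes f :: "'k::field mpoly"
  shows "f \<in> ideal_gen (monomial_of ` D) \<longleftrightarrow> (\<forall>m\<in>Poly_Mapping.keys f. \<exists>d\<in>D. dv d m)"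
proof
  assume "f \<in> ideal_gen (monomial_of ` D)"
  then obtain F r where F: "finite F" "F \<subseteq> monomial_of ` D" "f = (\<Sum>g\<in>F. r g * g)"
    unfolding ideal_gen_def by blast
  show "\<forall>m\<in>Poly_Mapping.keys f. \<exists>d\<in>D. dv d m"
  proof
    fix m assume "m \<in> Poly_Mapping.keys f"
    moreover have "Poly_Mapping.keys f \<subseteq> (\<Union>g\<in>F. Poly_Mapping.keys (r g * g))"
      unfolding F(3) by (rule keys_sum)
    ultimately obtain g where g: "g \<in> F" "m \<in> Poly_Mapping.keys (r g * g)" by blast
    obtain d where d: "d \<in> D" "g = monomial_of d" using g(1) F(2) by blast
    have "m \<in> {k + l | k l. k \<in> Poly_Mapping.keys (r g) \<and> l \<in> Poly_Mapping.keys g}"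
      using keys_mult[of "r g" g] g(2) by (rule subsetD)
    then obtain k l where "m = k + l" "l \<in> Poly_Mapping.keys g" by blast
    then have "m = k + d" using d(2) by (simp add: keys_monomial_of)
    then have "dv d m" unfolding dv_def by (simp add: lookup_add)
    then show "\<exists>d\<in>D. dv d m" using d(1) by blast
  qed
next
  assume H: "\<forall>m\<in>Poly_Mapping.keys f. \<exists>d\<in>D. dv d m"
  have "(\<Sum>m\<in>Poly_Mapping.keys f. Poly_Mapping.single m (Poly_Mapping.lookup f m)) \<in> ideal_gen (monomial_of ` D)"
  proof (rule ideal_gen_sum)
    fix m assume "m \<in> Poly_Mapping.keys f"
    then obtain d where d: "d \<in> D" "dv d m" using H by blast
    show "Poly_Mapping.single m (Poly_Mapping.lookup f m) \<in> ideal_gen (monomial_of ` D)"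
      unfolding single_split[OF d(2)] using d(1) by (intro ideal_gen_mult ideal_gen_gen) auto
  qed simp
  then show "f \<in> ideal_gen (monomial_of ` D)" using poly_expand[of f] by simp
qed

lemma mono_mem_MI:
  "(monomial_of m :: 'k::field mpoly) \<in> ideal_gen (monomial_of ` D) \<longleftrightarrow> (\<exists>d\<in>D. dv d m)"
  by (simp add: mem_MI keys_monomial_of)

lemma MI_UNIV: "ideal_gen (monomial_of ` {0}) = (UNIV :: 'k::field mpoly set)"
proof -
  have "f \<in> ideal_gen (monomial_of ` {0})" for f :: "'k mpoly"
  proof -
    have "f * monomial_of 0 \<in> ideal_gen (monomial_of ` {0})"
      by (intro ideal_gen_mult ideal_gen_gen) simp
    moreover have "monomial_of 0 = (1::'k mpoly)" by (simp add: monomial_of_def)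
    ultimately show ?thesis by simp
  qed
  then show ?thesis by auto
qed

definition msum :: "mono set \<Rightarrow> mono set \<Rightarrow> mono set" where
  "msum D1 D2 = {d1 + d2 | d1 d2. d1 \<in> D1 \<and> d2 \<in> D2}"

lemma ideal_mult_MI:
  "ideal_mult (ideal_gen (monomial_of ` D1)) (ideal_gen (monomial_of ` D2)) =
   (ideal_gen (monomial_of ` msum D1 D2) :: 'k::field mpoly set)"
proof
  show "ideal_mult (ideal_gen (monomial_of ` D1)) (ideal_gen (monomial_of ` D2)) \<subseteq>
        (ideal_gen (monomial_of ` msum D1 D2) :: 'k::field mpoly set)"
    unfolding ideal_mult_def
  proof (rule ideal_gen_subset, rule subsetI)
    fix h :: "'k mpoly"
    assume "h \<in> {f * g |f g. f \<in> ideal_gen (monomial_of ` D1) \<and> g \<in> ideal_gen (monomial_of ` D2)}"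
    then obtain f g where fg: "h = f * g" "f \<in> ideal_gen (monomial_of ` D1)" "g \<in> ideal_gen (monomial_of ` D2)"
      by blast
    show "h \<in> ideal_gen (monomial_of ` msum D1 D2)"
      unfolding mem_MI
    proof
      fix m assume "m \<in> Poly_Mapping.keys h"
      then have "m \<in> {k + l | k l. k \<in> Poly_Mapping.keys f \<and> l \<in> Poly_Mapping.keys g}"
        using keys_mult[of f g] fg(1) by blast
      then obtain k l where kl: "m = k + l" "k \<in> Poly_Mapping.keys f" "l \<in> Poly_Mapping.keys g" by blast
      obtain d1 where d1: "d1 \<in> D1" "dv d1 k" using kl(2) fg(2) unfolding mem_MI by blast
      obtain d2 where d2: "d2 \<in> D2" "dv d2 l" using kl(3) fg(3) unfolding mem_MI by blast
      have "dv (d1 + d2) m" using d1(2) d2(2) kl(1) unfolding dv_def by (simp add: lookup_add add_mono)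
      moreover have "d1 + d2 \<in> msum D1 D2" unfolding msum_def using d1 d2 by blast
      ultimately show "\<exists>d\<in>msum D1 D2. dv d m" by blast
    qed
  qed
next
  show "(ideal_gen (monomial_of ` msum D1 D2) :: 'k::field mpoly set) \<subseteq>
        ideal_mult (ideal_gen (monomial_of ` D1)) (ideal_gen (monomial_of ` D2))"
    unfolding ideal_mult_def
  proof (rule ideal_gen_subset, rule subsetI)
    fix h :: "'k mpoly"
    assume "h \<in> monomial_of ` msum D1 D2"
    then obtain d1 d2 where d: "h = monomial_of (d1 + d2)" "d1 \<in> D1" "d2 \<in> D2"
      unfolding msum_def by blast
    have 1: "h = monomial_of d1 * monomial_of d2" using d(1) by (simp add: monomial_of_mult)
    have 2: "monomial_of d1 \<in> ideal_gen (monomial_of ` D1)" using d(2) by (intro ideal_gen_gen) auto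
    have 3: "monomial_of d2 \<in> ideal_gen (monomial_of ` D2)" using d(3) by (intro ideal_gen_gen) auto
    show "h \<in> ideal_gen {f * g |f g. f \<in> ideal_gen (monomial_of ` D1) \<and> g \<in> ideal_gen (monomial_of ` D2)}"
      apply (rule ideal_gen_gen, rule CollectI)
      apply (rule exI[of _ "monomial_of d1"], rule exI[of _ "monomial_of d2"])
      using 1 2 3 by simp
  qed
qed

section \<open>The generators of the powers\<close>

lemma add_edge:
  assumes "inGi s na nb np nq nx nz"
  shows "inGi (s+1) (na+1) (nb+1) np nq nx nz" "inGi (s+1) (na+1) nb np nq (nx+1) nz"
    "inGi (s+1) na (nb+1) np nq (nx+1) nz" "inGi (s+1) (na+1) nb (np+1) nq nx nz"
    "inGi (s+1) na (nb+1) np (nq+1) nx nz" "inGi (s+1) na nb (np+1) nq nx (nz+1)"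
    "inGi (s+1) na nb np nq (nx+1) (nz+1)" "inGi (s+1) na nb np (nq+1) nx (nz+1)"
  using assms unfolding inGi_def by auto

lemma rem_edge:
  assumes "s \<ge> 1" "inGi s na nb np nq nx nz"
  shows "(na \<ge> 1 \<and> nb \<ge> 1 \<and> inGi (s-1) (na-1) (nb-1) np nq nx nz) \<or>
         (na \<ge> 1 \<and> nx \<ge> 1 \<and> inGi (s-1) (na-1) nb np nq (nx-1) nz) \<or>
         (nb \<ge> 1 \<and> nx \<ge> 1 \<and> inGi (s-1) na (nb-1) np nq (nx-1) nz) \<or>
         (na \<ge> 1 \<and> np \<ge> 1 \<and> inGi (s-1) (na-1) nb (np-1) nq nx nz) \<or>
         (nb \<ge> 1 \<and> nq \<ge> 1 \<and> inGi (s-1) na (nb-1) np (nq-1) nx nz) \<or>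
         (np \<ge> 1 \<and> nz \<ge> 1 \<and> inGi (s-1) na nb (np-1) nq nx (nz-1)) \<or>
         (nx \<ge> 1 \<and> nz \<ge> 1 \<and> inGi (s-1) na nb np nq (nx-1) (nz-1)) \<or>
         (nq \<ge> 1 \<and> nz \<ge> 1 \<and> inGi (s-1) na nb np (nq-1) nx (nz-1))"
  using assms unfolding inGi_def by (smt (verit))

definition e2 :: "var \<Rightarrow> var \<Rightarrow> mono" where
  "e2 u v = Poly_Mapping.single u 1 + Poly_Mapping.single v 1"

lemma e2_comm: "e2 u v = e2 v u"
  unfolding e2_def by (simp add: add.commute)

definition Eset :: "mono set" where
  "Eset = {e2 u v | u v. {u, v} \<in> G_edges \<and> u \<noteq> v}"

lemma Eset_eq: "Eset = {e2 a b, e2 a x, e2 b x, e2 a p, e2 b q, e2 p z, e2 x z, e2 q z}"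
  unfolding Eset_def G_edges_def
  by (auto simp: doubleton_eq_iff e2_comm)

lemma Var_mult: "Var u * Var v = (monomial_of (e2 u v) :: 'k::field mpoly)"
  unfolding Var_def e2_def by (simp add: monomial_of_mult)

lemma edge_ideal_MI: "edge_ideal G_edges = (ideal_gen (monomial_of ` Eset) :: 'k::field mpoly set)"
proof -
  have "{Var u * Var v | u v. {u, v} \<in> G_edges \<and> u \<noteq> v} = (monomial_of ` Eset :: 'k mpoly set)"
    unfolding Eset_def by (auto simp: Var_mult)
  then show ?thesis unfolding edge_ideal_def by simp
qed

fun Gn :: "nat \<Rightarrow> mono set" where
  "Gn 0 = {0}"
| "Gn (Suc n) = msum Eset (Gn n)"

lemma ideal_power_MI:
  "ideal_power (edge_ideal G_edges :: 'k::field mpoly set) n = ideal_gen (monomial_of ` Gn n)"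
proof (induction n)
  case 0
  show ?case unfolding ideal_power.simps Gn.simps by (rule MI_UNIV[symmetric])
next
  case (Suc n)
  then show ?case by (simp add: edge_ideal_MI ideal_mult_MI)
qed

lemma I_add: "I (m1 + m2) t = I m1 t + I m2 t"
  unfolding I_def by (simp add: lookup_add)

lemma I_e2: "I (e2 u v) t = (if t = u then 1 else 0) + (if t = v then 1 else 0)"
  unfolding I_def e2_def by (simp add: lookup_add lookup_single when_def)

lemma I_zero: "I 0 t = 0"
  unfolding I_def by simp

lemma mono_eqI: "(\<And>t. I m t = I m' t) \<Longrightarrow> m = m'"
  unfolding I_def by (intro poly_mapping_eqI) simp

lemma all_var: "P a \<Longrightarrow> P b \<Longrightarrow> P p \<Longrightarrow> P q \<Longrightarrow> P x \<Longrightarrow> P z \<Longrightarrow> P t"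
  by (cases t) auto

lemma I_minus_e2:
  assumes "u \<noteq> v" "I m u \<ge> 1" "I m v \<ge> 1"
  shows "I (m - e2 u v) t = I m t - (if t = u then 1 else 0) - (if t = v then 1 else 0)"
  using assms unfolding I_def e2_def by (auto simp: lookup_add lookup_minus lookup_single when_def)

lemma e2_plus_minus:
  assumes "u \<noteq> v" "I m u \<ge> 1" "I m v \<ge> 1"
  shows "e2 u v + (m - e2 u v) = m"
  by (rule mono_eqI) (simp add: I_add I_minus_e2[OF assms] I_e2)

lemma Gn_inGm: "m \<in> Gn n \<Longrightarrow> inGm n m"
proof (induction n arbitrary: m)
  case 0
  then show ?case by (simp add: inGm_def inGi_def I_zero)
next
  case (Suc n)
  obtain e d where ed: "m = e + d" "e \<in> Eset" "d \<in> Gn n" using Suc.prems by (auto simp: msum_def)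
  have D: "inGi (int n) (I d a) (I d b) (I d p) (I d q) (I d x) (I d z)"
    using Suc.IH[OF ed(3)] unfolding inGm_def .
  from ed(2) show ?case
    unfolding Eset_eq inGm_def ed(1)
    using add_edge[OF D] by (auto simp: I_add I_e2 ac_simps)
qed

lemma inGm_Gn: "inGm n m \<Longrightarrow> m \<in> Gn n"
proof (induction n arbitrary: m)
  case 0
  then have H: "inGi 0 (I m a) (I m b) (I m p) (I m q) (I m x) (I m z)" unfolding inGm_def by simp
  then have Z: "I m a = 0" "I m b = 0" "I m p = 0" "I m q = 0" "I m x = 0" "I m z = 0"
    unfolding inGi_def by linarith+
  have "I m t = 0" for t using Z by (cases t) simp_all
  then have "m = 0" by (intro mono_eqI) (simp add: I_zero)
  then show ?case by simp
next
  case (Suc n)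
  have S: "inGi (int (Suc n)) (I m a) (I m b) (I m p) (I m q) (I m x) (I m z)"
    using Suc.prems unfolding inGm_def .
  have step: "m \<in> Gn (Suc n)" if uv: "u \<noteq> v" "I m u \<ge> 1" "I m v \<ge> 1" "e2 u v \<in> Eset"
      and R: "inGm n (m - e2 u v)" for u v
  proof -
    have "m - e2 u v \<in> Gn n" using Suc.IH[OF R] .
    then have "m \<in> msum Eset (Gn n)" unfolding msum_def using e2_plus_minus[OF uv(1-3)] uv(4)
      by (intro CollectI exI[of _ "e2 u v"] exI[of _ "m - e2 u v"]) simp
    then show ?thesis by simp
  qed
  have "int (Suc n) \<ge> 1" by simp
  from rem_edge[OF this S] show ?case
    apply (elim disjE conjE)
           apply (rule step[of a b]; simp add: Eset_eq inGm_def I_minus_e2)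
          apply (rule step[of a x]; simp add: Eset_eq inGm_def I_minus_e2)
         apply (rule step[of b x]; simp add: Eset_eq inGm_def I_minus_e2)
        apply (rule step[of a p]; simp add: Eset_eq inGm_def I_minus_e2)
       apply (rule step[of b q]; simp add: Eset_eq inGm_def I_minus_e2)
      apply (rule step[of p z]; simp add: Eset_eq inGm_def I_minus_e2)
     apply (rule step[of x z]; simp add: Eset_eq inGm_def I_minus_e2)
    apply (rule step[of q z]; simp add: Eset_eq inGm_def I_minus_e2)
    done
qed

lemma Gn_eq: "Gn n = {m. inGm n m}"
  using Gn_inGm inGm_Gn by blast

lemma finite_Gn: "finite (Gn n)"
proof (induction n)
  case 0
  then show ?case by simp
next
  case (Suc n)
  have "msum Eset (Gn n) = (\<lambda>(e, d). e + d) ` (Eset \<times> Gn n)"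
    unfolding msum_def by auto
  moreover have "finite Eset" by (simp add: Eset_eq)
  ultimately show ?case using Suc by simp
qed

section \<open>Minimal generators\<close>

lemma dv_I: "dv d m \<longleftrightarrow> (\<forall>t. I d t \<le> I m t)"
  unfolding dv_def I_def by simp

lemma Gn_dv_eq:
  assumes "inGm s d" "inGm s m" "dv d m"
  shows "d = m"
proof -
  have le: "I d t \<le> I m t" for t using assms(3) unfolding dv_I by blast
  have "I d a + I d b + I d p + I d q + I d x + I d z = I m a + I m b + I m p + I m q + I m x + I m z"
    using assms(1,2) unfolding inGm_def inGi_def by simp
  then have Z: "I d a = I m a" "I d b = I m b" "I d p = I m p" "I d q = I m q" "I d x = I m x" "I d z = I m z"
    using le[of a] le[of b] le[of p] le[of q] le[of x] le[of z] by linarith+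
  have "I d t = I m t" for t using Z by (cases t) simp_all
  then show ?thesis by (rule mono_eqI)
qed

lemma dv_add: "dv d (d + c)"
  unfolding dv_def by (simp add: lookup_add)

lemma dv_trans: "dv d m \<Longrightarrow> dv m k \<Longrightarrow> dv d k"
  unfolding dv_def using order_trans by blast

lemma dv_split: "dv d m \<Longrightarrow> m = d + (m - d)"
  unfolding dv_def by (intro poly_mapping_eqI) (simp add: lookup_add lookup_minus)

lemma min_gens:
  "min_mono_gens (ideal_gen (monomial_of ` Gn s) :: 'k::field mpoly set) = monomial_of ` Gn s"
proof
  show "min_mono_gens (ideal_gen (monomial_of ` Gn s) :: 'k::field mpoly set) \<subseteq> monomial_of ` Gn s"
  proof
    fix h :: "'k mpoly" assume "h \<in> min_mono_gens (ideal_gen (monomial_of ` Gn s))"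
    then obtain m where m: "h = monomial_of m" "(monomial_of m :: 'k mpoly) \<in> ideal_gen (monomial_of ` Gn s)"
      "\<And>m' c. (monomial_of m' :: 'k mpoly) \<in> ideal_gen (monomial_of ` Gn s) \<and> m = m' + c \<longrightarrow> c = 0"
      unfolding min_mono_gens_def by blast
    obtain d where d: "d \<in> Gn s" "dv d m" using m(2) unfolding mono_mem_MI by blast
    have "(monomial_of d :: 'k mpoly) \<in> ideal_gen (monomial_of ` Gn s)"
      using d(1) by (intro ideal_gen_gen) auto
    then have "m - d = 0" using m(3)[of d "m - d"] dv_split[OF d(2)] by blast
    then have "m = d" using dv_split[OF d(2)] by simp
    then show "h \<in> monomial_of ` Gn s" using m(1) d(1) by blast
  qed
next
  show "monomial_of ` Gn s \<subseteq> (min_mono_gens (ideal_gen (monomial_of ` Gn s)) :: 'k::field mpoly set)"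
  proof
    fix h :: "'k mpoly" assume "h \<in> monomial_of ` Gn s"
    then obtain d where d: "h = monomial_of d" "d \<in> Gn s" by blast
    have mem: "(monomial_of d :: 'k mpoly) \<in> ideal_gen (monomial_of ` Gn s)"
      using d(2) by (intro ideal_gen_gen) auto
    have minimal: "c = 0" if H1: "(monomial_of m' :: 'k mpoly) \<in> ideal_gen (monomial_of ` Gn s)"
      and H2: "d = m' + c" for m' c
    proof -
      obtain d' where d': "d' \<in> Gn s" "dv d' m'" using H1 unfolding mono_mem_MI by blast
      have "dv d' d" using dv_trans[OF d'(2)] dv_add[of m' c] H2 by simp
      then have "d' = d" using Gn_dv_eq d'(1) d(2) unfolding Gn_eq by blast
      then have "I m' t + I c t = I m' t" for t
        using d'(2) H2 unfolding dv_I by (metis I_add antisym le_add_same_cancel1 I_nonneg)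
      then have "I c t = I 0 t" for t by (simp add: I_zero)
      then show "c = 0" by (rule mono_eqI)
    qed
    show "h \<in> min_mono_gens (ideal_gen (monomial_of ` Gn s))"
      unfolding min_mono_gens_def using d(1) mem minimal by blast
  qed
qed

definition wk1 :: "int \<Rightarrow> int \<Rightarrow> int \<Rightarrow> int \<Rightarrow> int" where
  "wk1 na nb np nq = (if na \<ge> 1 then np else if nb \<ge> 1 then - np else - \<bar>np - nq\<bar>)"

definition wk2 :: "int \<Rightarrow> int \<Rightarrow> int \<Rightarrow> int" where
  "wk2 na nb np = (if na \<ge> 1 \<or> nb \<ge> 1 then 0 else np)"

lemma within_iff:
  "(if na \<ge> 1 then np2 > np else if nb \<ge> 1 then np2 < np else
      (\<bar>np2 - nq2\<bar> < \<bar>np - nq\<bar> \<or> \<bar>np2 - nq2\<bar> = \<bar>np - nq\<bar> \<and> np2 > np))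
   \<longleftrightarrow> (wk1 na nb np nq < wk1 na nb np2 nq2 \<or> wk1 na nb np nq = wk1 na nb np2 nq2 \<and> wk2 na nb np < wk2 na nb np2)"
  by (cases "na \<ge> 1"; cases "nb \<ge> 1") (auto simp: wk1_def wk2_def)

definition keyi :: "int \<Rightarrow> int \<Rightarrow> int \<Rightarrow> int \<Rightarrow> int \<Rightarrow> int \<Rightarrow> int \<times> int \<times> int \<times> int \<times> int \<times> int" where
  "keyi na nb np nq nx nz = (nx, na, nb, - nz, wk1 na nb np nq, wk2 na nb np)"

lemma earli_keyi:
  "earli na2 nb2 np2 nq2 nx2 nz2 na nb np nq nx nz \<longleftrightarrow> keyi na nb np nq nx nz < keyi na2 nb2 np2 nq2 nx2 nz2"
proof -
  have "keyi na nb np nq nx nz < keyi na2 nb2 np2 nq2 nx2 nz2 \<longleftrightarrow>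
    nx < nx2 \<or> nx = nx2 \<and> (na < na2 \<or> na = na2 \<and> (nb < nb2 \<or> nb = nb2 \<and> (nz2 < nz \<or> nz = nz2 \<and>
      (wk1 na nb np nq < wk1 na2 nb2 np2 nq2 \<or> wk1 na nb np nq = wk1 na2 nb2 np2 nq2 \<and> wk2 na nb np < wk2 na2 nb2 np2))))"
    unfolding keyi_def by (simp add: less_prod_def')
  also have "\<dots> \<longleftrightarrow> nx2 > nx \<or> nx2 = nx \<and> (na2 > na \<or> na2 = na \<and> (nb2 > nb \<or> nb2 = nb \<and> (nz2 < nz \<or> nz2 = nz \<and>
      (wk1 na nb np nq < wk1 na nb np2 nq2 \<or> wk1 na nb np nq = wk1 na nb np2 nq2 \<and> wk2 na nb np < wk2 na nb np2))))"
    by auto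
  also have "\<dots> \<longleftrightarrow> earli na2 nb2 np2 nq2 nx2 nz2 na nb np nq nx nz"
    by (simp only: earli_def within_iff)
  finally show ?thesis by simp
qed

definition key :: "mono \<Rightarrow> int \<times> int \<times> int \<times> int \<times> int \<times> int" where
  "key m = keyi (I m a) (I m b) (I m p) (I m q) (I m x) (I m z)"

lemma earl_key: "earlm m2 m \<longleftrightarrow> key m < key m2"
  unfolding earlm_def key_def by (rule earli_keyi)

lemma key_inj:
  assumes "inGm s m" "inGm s m'" "key m = key m'"
  shows "m = m'"
proof -
  have e: "I m x = I m' x" "I m a = I m' a" "I m b = I m' b" "I m z = I m' z"
    using assms(3) unfolding key_def keyi_def by auto
  have w: "wk1 (I m a) (I m b) (I m p) (I m q) = wk1 (I m a) (I m b) (I m' p) (I m' q)"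
    "wk2 (I m a) (I m b) (I m p) = wk2 (I m a) (I m b) (I m' p)"
    using assms(3) e unfolding key_def keyi_def by auto
  have ep: "I m p = I m' p"
    using w unfolding wk1_def wk2_def by (auto split: if_splits)
  have "I m q = I m' q"
    using assms(1,2) e ep unfolding inGm_def inGi_def by linarith
  then have "I m t = I m' t" for t using e ep by (cases t) simp_all
  then show ?thesis by (rule mono_eqI)
qed

lemma exists_sorted:
  fixes key :: "'a \<Rightarrow> 'b::linorder"
  assumes "finite M" "inj_on key M"
  shows "\<exists>L. distinct L \<and> set L = M \<and> sorted_wrt (\<lambda>u v. key v < key u) L"
proof -
  define KL where "KL = sorted_list_of_set (key ` M)"
  define L where "L = map (the_inv_into M key) (rev KL)"
  have setKL: "set KL = key ` M" unfolding KL_def using assms(1) by simp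
  have sKL: "sorted_wrt (<) KL" unfolding KL_def by (simp add: strict_sorted_iff)
  have mapL: "map key L = rev KL"
  proof -
    have H: "\<And>k. k \<in> set (rev KL) \<Longrightarrow> (key \<circ> the_inv_into M key) k = k"
      using setKL f_the_inv_into_f[OF assms(2)] by auto
    show ?thesis unfolding L_def map_map by (rule map_idI, rule H)
  qed
  have "sorted_wrt (\<lambda>x y. y < x) (map key L)" unfolding mapL using sKL by (simp add: sorted_wrt_rev)
  then have sL: "sorted_wrt (\<lambda>u v. key v < key u) L" by (simp add: sorted_wrt_map)
  have "distinct (map key L)" unfolding mapL using sKL by (simp add: strict_sorted_iff)
  then have dL: "distinct L" by (simp add: distinct_map)
  have "set L = M" unfolding L_def using setKL assms(2) by (auto simp: the_inv_into_f_f image_iff)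
  then show ?thesis using dL sL by blast
qed

section \<open>Colon ideals\<close>

lemma keys_times_mono:
  fixes f :: "'k::field mpoly"
  shows "Poly_Mapping.keys (f * monomial_of u) = (\<lambda>k. k + u) ` Poly_Mapping.keys f"
proof
  show "Poly_Mapping.keys (f * monomial_of u) \<subseteq> (\<lambda>k. k + u) ` Poly_Mapping.keys f"
  proof
    fix m assume "m \<in> Poly_Mapping.keys (f * monomial_of u)"
    then have "m \<in> {k + l | k l. k \<in> Poly_Mapping.keys f \<and> l \<in> Poly_Mapping.keys (monomial_of u :: 'k mpoly)}"
      using keys_mult[of f "monomial_of u"] by blast
    then show "m \<in> (\<lambda>k. k + u) ` Poly_Mapping.keys f" by (auto simp: keys_monomial_of)
  qed
next
  have e: "f * monomial_of u = (\<Sum>m\<in>Poly_Mapping.keys f. Poly_Mapping.single (m + u) (Poly_Mapping.lookup f m))"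
  proof -
    have "f * monomial_of u = (\<Sum>m\<in>Poly_Mapping.keys f. Poly_Mapping.single m (Poly_Mapping.lookup f m)) * monomial_of u"
      by (rule arg_cong[where f="\<lambda>g. g * monomial_of u"], rule poly_expand)
    also have "\<dots> = (\<Sum>m\<in>Poly_Mapping.keys f. Poly_Mapping.single (m + u) (Poly_Mapping.lookup f m))"
      by (simp add: sum_distrib_right monomial_of_def mult_single)
    finally show ?thesis .
  qed
  have "Poly_Mapping.lookup (f * monomial_of u) (k + u) = Poly_Mapping.lookup f k" for k
    unfolding e by (simp add: lookup_sum lookup_single when_def sum.delta in_keys_iff)
  then show "(\<lambda>k. k + u) ` Poly_Mapping.keys f \<subseteq> Poly_Mapping.keys (f * monomial_of u)"
    by (auto simp: in_keys_iff)
qed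

lemma I_single: "I (Poly_Mapping.single v n) t = (if t = v then int n else 0)"
  unfolding I_def by (simp add: lookup_single when_def)

lemma colon_lemma:
  fixes s :: nat and u :: mono and P :: "mono set"
  assumes s2: "s \<ge> 2" and uG: "inGm s u"
    and P1: "\<And>d. d \<in> P \<Longrightarrow> inGm s d \<and> earlm d u"
    and P2: "\<And>d. inGm s d \<Longrightarrow> earlm d u \<Longrightarrow> d \<in> P"
  shows "colon (ideal_gen (monomial_of ` P)) (monomial_of u :: 'k::field mpoly) =
         ideal_gen (Var ` {v. \<exists>d\<in>P. dv d (u + Poly_Mapping.single v 1)})"
proof -
  define S where "S = {v. \<exists>d\<in>P. dv d (u + Poly_Mapping.single v 1)}"
  have VarS: "(Var ` S :: 'k mpoly set) = monomial_of ` ((\<lambda>v. Poly_Mapping.single v 1) ` S)"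
    by (simp add: image_image Var_def)
  have key: "(\<exists>d\<in>P. dv d (k + u)) \<longleftrightarrow> (\<exists>v\<in>S. dv (Poly_Mapping.single v 1) k)" for k
  proof
    assume "\<exists>d\<in>P. dv d (k + u)"
    then obtain d where d: "d \<in> P" "dv d (k + u)" by blast
    from P1[OF d(1)] have dG: "inGm s d" and de: "earlm d u" by auto
    obtain v w where vw: "v \<noteq> w" "I d v > I u v" "I u w \<ge> 1" "inGm s (sh u v w)" "earlm (sh u v w) u"
      using exch_mono[OF s2 uG dG de] by blast
    have "sh u v w \<in> P" using P2 vw(4,5) by blast
    moreover have "dv (sh u v w) (u + Poly_Mapping.single v 1)"
      unfolding dv_I using I_sh[OF vw(1,3)] by (auto simp: I_add I_single)
    ultimately have vS: "v \<in> S" unfolding S_def by blast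
    have "I d v \<le> I k v + I u v" using d(2) unfolding dv_I I_add by blast
    then have "I k v \<ge> 1" using vw(2) by linarith
    then have "dv (Poly_Mapping.single v 1) k" unfolding dv_I by (auto simp: I_single I_nonneg)
    then show "\<exists>v\<in>S. dv (Poly_Mapping.single v 1) k" using vS by blast
  next
    assume "\<exists>v\<in>S. dv (Poly_Mapping.single v 1) k"
    then obtain v d where v: "d \<in> P" "dv d (u + Poly_Mapping.single v 1)" "dv (Poly_Mapping.single v 1) k"
      unfolding S_def by blast
    have "dv (u + Poly_Mapping.single v 1) (k + u)" using v(3) unfolding dv_I by (auto simp: I_add)
    then show "\<exists>d\<in>P. dv d (k + u)" using v(1,2) dv_trans by blast
  qed
  have "f \<in> colon (ideal_gen (monomial_of ` P)) (monomial_of u) \<longleftrightarrow> f \<in> ideal_gen (Var ` S)"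
    for f :: "'k mpoly"
  proof -
    have "f \<in> colon (ideal_gen (monomial_of ` P)) (monomial_of u)
        \<longleftrightarrow> (\<forall>m\<in>Poly_Mapping.keys (f * monomial_of u). \<exists>d\<in>P. dv d m)"
      unfolding colon_def mem_MI by simp
    also have "\<dots> \<longleftrightarrow> (\<forall>k\<in>Poly_Mapping.keys f. \<exists>d\<in>P. dv d (k + u))"
      unfolding keys_times_mono by simp
    also have "\<dots> \<longleftrightarrow> (\<forall>k\<in>Poly_Mapping.keys f. \<exists>v\<in>S. dv (Poly_Mapping.single v 1) k)"
      using key by simp
    also have "\<dots> \<longleftrightarrow> f \<in> ideal_gen (Var ` S)"
      unfolding VarS mem_MI by simp
    finally show ?thesis .
  qed
  then show ?thesis unfolding S_def by blast
qed

theorem proposition5p2: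
  fixes s :: nat
  assumes "s \<ge> 2"
  shows "linear_quotients (ideal_power (edge_ideal G_edges :: 'k::field mpoly set) s)"
proof -
  have fin: "finite (Gn s)" by (rule finite_Gn)
  have inj: "inj_on key (Gn s)" using key_inj unfolding Gn_eq inj_on_def by blast
  obtain L where L: "distinct L" "set L = Gn s" "sorted_wrt (\<lambda>u v. key v < key u) L"
    using exists_sorted[OF fin inj] by blast
  define us where "us = map (monomial_of :: mono \<Rightarrow> 'k mpoly) L"
  have lq: "\<exists>S. colon (ideal_gen (set (take i us))) (us ! i) = ideal_gen (Var ` S)"
    if i: "1 \<le> i \<and> i < length us" for i
  proof -
    have il: "i < length L" using i unfolding us_def by simp
    have takeeq: "set (take i us) = monomial_of ` set (take i L)" unfolding us_def by (simp add: take_map)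
    have nth: "us ! i = monomial_of (L ! i)" unfolding us_def using il by simp
    have uG: "inGm s (L ! i)" using L(2) il nth_mem Gn_eq by blast
    have P1: "inGm s d \<and> earlm d (L ! i)" if "d \<in> set (take i L)" for d
    proof -
      have "\<exists>j<length (take i L). take i L ! j = d" using that by (simp only: in_set_conv_nth)
      then obtain j where j: "j < length (take i L)" "take i L ! j = d" by blast
      have ji: "j < i" "d = L ! j" using j il by auto
      have "key (L ! i) < key (L ! j)" using sorted_wrt_nth_less[OF L(3) ji(1) il] by simp
      moreover have "d \<in> Gn s" using ji il L(2) nth_mem by fastforce
      ultimately show ?thesis using ji(2) unfolding earl_key Gn_eq by simp
    qed
    have P2: "d \<in> set (take i L)" if dG: "inGm s d" and de: "earlm d (L ! i)" for d
    proof -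
      have "d \<in> set L" using dG L(2) Gn_eq by blast
      then obtain j where j: "j < length L" "d = L ! j" by (auto simp: in_set_conv_nth)
      have kl: "key (L ! i) < key d" using de unfolding earl_key .
      have "j < i"
      proof (rule ccontr)
        assume "\<not> j < i"
        then consider "j = i" | "i < j" by linarith
        then show False
        proof cases
          case 1
          then show False using kl j(2) by simp
        next
          case 2
          have "key (L ! j) < key (L ! i)" using sorted_wrt_nth_less[OF L(3) 2 j(1)] by simp
          then show False using kl j(2) by simp
        qed
      qed
      then show ?thesis using j il by (auto simp: in_set_conv_nth intro!: exI[of _ j])
    qed
    show ?thesis
      unfolding takeeq nth using colon_lemma[OF assms uG P1 P2] by blast
  qed
  show ?thesis
    unfolding linear_quotients_def ideal_power_MI min_gens
  proof (intro exI[of _ us] conjI)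
    show "distinct us" unfolding us_def using L(1)
      by (simp add: distinct_map inj_on_subset[OF monomial_of_inj subset_UNIV])
    show "set us = monomial_of ` Gn s" unfolding us_def using L(2) by simp
    show "\<forall>i. 1 \<le> i \<and> i < length us \<longrightarrow> (\<exists>S. colon (ideal_gen (set (take i us))) (us ! i) = ideal_gen (Var ` S))"
      using lq by blast
  qed
qed

end
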